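(* Let $\Theta_0,\Theta_1$ be quantum channels from a finite-dimensional system $A$ to a finite-dimensional system $B$, and $\lambda\in[0,1]$. Suppose one receives a single use of a channel that equals $\Theta_0$ with probability $\lambda$ and $\Theta_1$ with probability $1-\lambda$, and one may prepare any state $\sigma$ on $A\otimes C$ for any finite-dimensional ancilla $C$, apply the unknown channel tensored with the identity on $C$, and then perform only an incoherent measurement on $B\otimes C$ (a POVM all of whose elements are diagonal in the incoherent product basis), guessing $i\in\{0,1\}$. The optimal probability $P_c(\lambda,\Theta_0,\Theta_1)$ of guessing $i$ correctly is $$P_c(\lambda,\Theta_0,\Theta_1)=\frac12+\frac12\max_{|\psi\rangle}\|T(|\psi\rangle\langle\psi|)\|_1,\qquad T=\Delta\big[\lambda\Theta_0-(1-\lambda)\Theta_1\big],$$ where the maximum is over pure states on $A$.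
   Context: Every finite-dimensional system carries a fixed orthonormal incoherent basis; composite systems use the product basis. $\Delta(\rho)=\sum_i|i\rangle\langle i|\rho|i\rangle\langle i|$ is the total dephasing map. $\|X\|_1=\operatorname{tr}\sqrt{X^\dagger X}$ is the trace norm. *)

theory Defs
  imports "Jordan_Normal_Form.Matrix"
begin

definition mtrace :: "complex mat \<Rightarrow> complex" where
  "mtrace M = (\<Sum>i<dim_row M. M $$ (i,i))"

definition adj :: "complex mat \<Rightarrow> complex mat" where
  "adj X = mat (dim_col X) (dim_row X) (\<lambda>(i,j). cnj (X $$ (j,i)))"

definition psd :: "nat \<Rightarrow> complex mat \<Rightarrow> bool" where
  "psd n M \<longleftrightarrow> M \<in> carrier_mat n n \<and>
     (\<forall>v \<in> carrier_vec n. let z = conjugate v \<bullet> (M *\<^sub>v v) in Im z = 0 \<and> Re z \<ge> 0)"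

definition density :: "nat \<Rightarrow> complex mat \<Rightarrow> bool" where
  "density n \<rho> \<longleftrightarrow> psd n \<rho> \<and> mtrace \<rho> = 1"

definition psd_sqrt :: "complex mat \<Rightarrow> complex mat" where
  "psd_sqrt M = (THE S. psd (dim_row M) S \<and> S * S = M)"

definition trace_norm :: "complex mat \<Rightarrow> real" where
  "trace_norm X = Re (mtrace (psd_sqrt (adj X * X)))"

(* total dephasing in the incoherent (computational) basis *)
definition dephase :: "complex mat \<Rightarrow> complex mat" where
  "dephase M = mat (dim_row M) (dim_col M) (\<lambda>(i,j). if i = j then M $$ (i,i) else 0)"

definition proj :: "complex vec \<Rightarrow> complex mat" where
  "proj \<psi> = mat (dim_vec \<psi>) (dim_vec \<psi>) (\<lambda>(i,j). \<psi> $ i * cnj (\<psi> $ j))"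

definition pure_state :: "nat \<Rightarrow> complex vec \<Rightarrow> bool" where
  "pure_state n \<psi> \<longleftrightarrow> \<psi> \<in> carrier_vec n \<and> conjugate \<psi> \<bullet> \<psi> = 1"

(* (\<Theta> \<otimes> id_C)(\<sigma>) for \<sigma> on A \<otimes> C, product index (a,c) \<mapsto> a * dC + c;
   applied blockwise: (\<Theta>\<otimes>id)(\<Sigma> X_{cc'} \<otimes> |c><c'|) = \<Sigma> \<Theta>(X_{cc'}) \<otimes> |c><c'| *)
definition block :: "nat \<Rightarrow> nat \<Rightarrow> nat \<Rightarrow> nat \<Rightarrow> complex mat \<Rightarrow> complex mat" where
  "block dA dC c c' \<sigma> = mat dA dA (\<lambda>(a,a'). \<sigma> $$ (a * dC + c, a' * dC + c'))"

definition tensor_id :: "(complex mat \<Rightarrow> complex mat) \<Rightarrow> nat \<Rightarrow> nat \<Rightarrow> nat \<Rightarrow> complex mat \<Rightarrow> complex mat" where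
  "tensor_id \<Theta> dA dB dC \<sigma> = mat (dB * dC) (dB * dC)
     (\<lambda>(i,j). \<Theta> (block dA dC (i mod dC) (j mod dC) \<sigma>) $$ (i div dC, j div dC))"

definition channel :: "nat \<Rightarrow> nat \<Rightarrow> (complex mat \<Rightarrow> complex mat) \<Rightarrow> bool" where
  "channel dA dB \<Theta> \<longleftrightarrow>
     (\<forall>X \<in> carrier_mat dA dA. \<Theta> X \<in> carrier_mat dB dB) \<and>
     (\<forall>X \<in> carrier_mat dA dA. \<forall>Y \<in> carrier_mat dA dA. \<Theta> (X + Y) = \<Theta> X + \<Theta> Y) \<and>
     (\<forall>X \<in> carrier_mat dA dA. \<forall>a. \<Theta> (a \<cdot>\<^sub>m X) = a \<cdot>\<^sub>m \<Theta> X) \<and>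
     (\<forall>X \<in> carrier_mat dA dA. mtrace (\<Theta> X) = mtrace X) \<and>
     (\<forall>dC. \<forall>\<sigma>. psd (dA * dC) \<sigma> \<longrightarrow> psd (dB * dC) (tensor_id \<Theta> dA dB dC \<sigma>))"

definition incoherent_povm :: "nat \<Rightarrow> complex mat \<Rightarrow> complex mat \<Rightarrow> bool" where
  "incoherent_povm d M0 M1 \<longleftrightarrow> psd d M0 \<and> psd d M1 \<and> diagonal_mat M0 \<and> diagonal_mat M1 \<and>
     M0 + M1 = 1\<^sub>m d"

definition success_probs :: "real \<Rightarrow> (complex mat \<Rightarrow> complex mat) \<Rightarrow> (complex mat \<Rightarrow> complex mat)
    \<Rightarrow> nat \<Rightarrow> nat \<Rightarrow> real set" where
  "success_probs lam \<Theta>0 \<Theta>1 dA dB = {p. \<exists>dC \<sigma> M0 M1. dC > 0 \<and> density (dA * dC) \<sigma> \<and>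
      incoherent_povm (dB * dC) M0 M1 \<and>
      p = lam * Re (mtrace (M0 * tensor_id \<Theta>0 dA dB dC \<sigma>))
          + (1 - lam) * Re (mtrace (M1 * tensor_id \<Theta>1 dA dB dC \<sigma>))}"

definition P_c :: "real \<Rightarrow> (complex mat \<Rightarrow> complex mat) \<Rightarrow> (complex mat \<Rightarrow> complex mat)
    \<Rightarrow> nat \<Rightarrow> nat \<Rightarrow> real" where
  "P_c lam \<Theta>0 \<Theta>1 dA dB = Sup (success_probs lam \<Theta>0 \<Theta>1 dA dB)"

end

theory Submission
  imports Defs "HOL-Analysis.Function_Topology" "HOL-Analysis.Elementary_Metric_Spaces"
begin
definition B :: "nat \<Rightarrow> complex mat \<Rightarrow> (nat \<Rightarrow> complex) \<Rightarrow> (nat \<Rightarrow> complex) \<Rightarrow> complex" where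
  "B n M u w = (\<Sum>i<n. \<Sum>j<n. cnj (u i) * M $$ (i,j) * w j)"

definition dl :: "nat \<Rightarrow> nat \<Rightarrow> complex" where
  "dl k = (\<lambda>i. if i = k then 1 else 0)"

lemma B_add_left: "B n M (\<lambda>i. u i + u' i) w = B n M u w + B n M u' w"
  unfolding B_def by (simp add: algebra_simps sum.distrib)

lemma B_add_right: "B n M u (\<lambda>i. w i + w' i) = B n M u w + B n M u w'"
  unfolding B_def by (simp add: algebra_simps sum.distrib)

lemma B_smult_left: "B n M (\<lambda>i. c * u i) w = cnj c * B n M u w"
  unfolding B_def by (simp add: algebra_simps sum_distrib_left)

lemma B_smult_right: "B n M u (\<lambda>i. c * w i) = c * B n M u w"
  unfolding B_def by (simp add: algebra_simps sum_distrib_left)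

lemma B_dl_left: assumes "k < n" shows "B n M (dl k) w = (\<Sum>j<n. M $$ (k,j) * w j)"
proof -
  have "B n M (dl k) w = (\<Sum>i<n. if i = k then (\<Sum>j<n. M $$ (i,j) * w j) else 0)"
    unfolding B_def by (intro sum.cong) (auto simp: dl_def)
  also have "\<dots> = (\<Sum>j<n. M $$ (k,j) * w j)" using assms by simp
  finally show ?thesis .
qed

lemma B_dl_right: assumes "k < n" shows "B n M u (dl k) = (\<Sum>i<n. cnj (u i) * M $$ (i,k))"
proof -
  have "B n M u (dl k) = (\<Sum>i<n. \<Sum>j<n. if j = k then cnj (u i) * M $$ (i,j) else 0)"
    unfolding B_def by (intro sum.cong) (auto simp: dl_def)
  also have "\<dots> = (\<Sum>i<n. cnj (u i) * M $$ (i,k))" using assms by simp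
  finally show ?thesis .
qed

lemma B_dl_dl: assumes "i < n" "j < n" shows "B n M (dl i) (dl j) = M $$ (i,j)"
proof -
  have "(\<Sum>ja<n. M $$ (i, ja) * dl j ja) = (\<Sum>ja<n. if ja = j then M $$ (i, ja) else 0)"
    by (intro sum.cong) (auto simp: dl_def)
  thus ?thesis using assms by (simp add: B_dl_left)
qed

lemma qf_vec:
  assumes "v \<in> carrier_vec n" "M \<in> carrier_mat n n"
  shows "conjugate v \<bullet> (M *\<^sub>v v) = B n M (\<lambda>i. v $ i) (\<lambda>i. v $ i)"
proof -
  have "(M *\<^sub>v v) $ i = (\<Sum>j<n. M $$ (i,j) * v $ j)" if "i < n" for i
    using assms that by (auto simp: scalar_prod_def lessThan_atLeast0 intro!: sum.cong)
  thus ?thesis using assms unfolding B_def scalar_prod_def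
    by (auto simp: sum_distrib_left algebra_simps lessThan_atLeast0 intro!: sum.cong)
qed

lemma psd_iff:
  "psd n M \<longleftrightarrow> M \<in> carrier_mat n n \<and> (\<forall>w. Im (B n M w w) = 0 \<and> Re (B n M w w) \<ge> 0)"
proof
  assume p: "psd n M"
  hence M: "M \<in> carrier_mat n n" by (simp add: psd_def)
  show "M \<in> carrier_mat n n \<and> (\<forall>w. Im (B n M w w) = 0 \<and> Re (B n M w w) \<ge> 0)"
  proof (intro conjI allI M)
    fix w :: "nat \<Rightarrow> complex"
    have v: "vec n w \<in> carrier_vec n" by simp
    have "B n M w w = B n M (\<lambda>i. vec n w $ i) (\<lambda>i. vec n w $ i)"
      unfolding B_def by (intro sum.cong refl) auto
    also have "\<dots> = conjugate (vec n w) \<bullet> (M *\<^sub>v vec n w)" using qf_vec[OF v M] by simp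
    finally have e: "B n M w w = conjugate (vec n w) \<bullet> (M *\<^sub>v vec n w)" .
    from p v show "Im (B n M w w) = 0" "Re (B n M w w) \<ge> 0"
      unfolding psd_def e Let_def by auto
  qed
next
  assume a: "M \<in> carrier_mat n n \<and> (\<forall>w. Im (B n M w w) = 0 \<and> Re (B n M w w) \<ge> 0)"
  show "psd n M" unfolding psd_def Let_def
    using a qf_vec[of _ n M] by auto
qed

lemma psdD: "psd n M \<Longrightarrow> Im (B n M w w) = 0" "psd n M \<Longrightarrow> Re (B n M w w) \<ge> 0"
  "psd n M \<Longrightarrow> M \<in> carrier_mat n n"
  by (auto simp: psd_iff)

lemma psd_diag_real:
  assumes "psd n M" "i < n" shows "Im (M $$ (i,i)) = 0" "Re (M $$ (i,i)) \<ge> 0"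
  using psdD(1,2)[OF assms(1), of "dl i"] B_dl_dl[OF assms(2) assms(2), of M] by auto

lemma psd_herm:
  assumes p: "psd n M" and i: "i < n" and j: "j < n"
  shows "M $$ (j,i) = cnj (M $$ (i,j))"
proof -
  have e1: "B n M (\<lambda>k. dl i k + dl j k) (\<lambda>k. dl i k + dl j k)
     = M $$ (i,i) + M $$ (i,j) + M $$ (j,i) + M $$ (j,j)"
    by (simp add: B_add_left B_add_right B_dl_dl i j)
  have e2: "B n M (\<lambda>k. dl i k + \<i> * dl j k) (\<lambda>k. dl i k + \<i> * dl j k)
     = M $$ (i,i) + \<i> * M $$ (i,j) - \<i> * M $$ (j,i) + M $$ (j,j)"
    by (simp add: B_add_left B_add_right B_smult_left B_smult_right B_dl_dl i j algebra_simps)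
  have a: "Im (M $$ (i,i)) = 0" "Im (M $$ (j,j)) = 0" using psd_diag_real p i j by auto
  have b1: "Im (M $$ (i,j) + M $$ (j,i)) = 0" using psdD(1)[OF p, of "\<lambda>k. dl i k + dl j k"] e1 a by simp
  have b2: "Re (M $$ (i,j) - M $$ (j,i)) = 0" using psdD(1)[OF p, of "\<lambda>k. dl i k + \<i> * dl j k"] e2 a by simp
  show ?thesis using b1 b2 by (simp add: complex_eq_iff)
qed

lemma psd_kernel:
  assumes p: "psd n P" and z: "B n P u u = 0" and k: "k < n"
  shows "(\<Sum>j<n. P $$ (k,j) * u j) = 0"
proof (rule ccontr)
  define y where "y = (\<Sum>j<n. P $$ (k,j) * u j)"
  assume "(\<Sum>j<n. P $$ (k,j) * u j) \<noteq> 0"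
  hence y0: "y \<noteq> 0" by (simp add: y_def)
  have c1: "B n P u (dl k) = cnj y"
    unfolding y_def B_dl_right[OF k] by (simp add: psd_herm[OF p _ k] mult.commute)
  have c2: "B n P (dl k) u = y" unfolding y_def B_dl_left[OF k] ..
  obtain a where a: "P $$ (k,k) = complex_of_real a" "a \<ge> 0"
    using psd_diag_real[OF p k] by (metis complex_eq_iff complex_of_real_def complex.sel)
  define r :: real where "r = 1 / (a + 1)"
  have r: "r > 0" "r * a < 1" using a(2) by (auto simp: r_def field_simps)
  define t where "t = - complex_of_real r * y"
  have "B n P (\<lambda>i. u i + t * dl k i) (\<lambda>i. u i + t * dl k i)
      = B n P u u + t * B n P u (dl k) + cnj t * B n P (dl k) u + cnj t * t * P $$ (k,k)"
    by (simp add: B_add_left B_add_right B_smult_left B_smult_right B_dl_dl k algebra_simps)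
  also have "\<dots> = complex_of_real (r * r * a - 2 * r) * (y * cnj y)"
    unfolding z c1 c2 t_def a(1)
    by (simp add: algebra_simps)
  also have "\<dots> = complex_of_real ((r * r * a - 2 * r) * (cmod y)^2)"
    by (simp only: of_real_mult complex_norm_square)
  finally have e: "B n P (\<lambda>i. u i + t * dl k i) (\<lambda>i. u i + t * dl k i) = complex_of_real ((r * r * a - 2 * r) * (cmod y)^2)" .
  have "(r * r * a - 2 * r) * (cmod y)^2 \<ge> 0" using psdD(2)[OF p, of "\<lambda>i. u i + t * dl k i"] e by simp
  moreover have "(r * r * a - 2 * r) < 0" using r by (simp add: algebra_simps)
  moreover have "(cmod y)^2 > 0" using y0 by simp
  ultimately show False by (meson mult_neg_pos not_le)
qed

definition diagm :: "nat \<Rightarrow> (nat \<Rightarrow> complex) \<Rightarrow> complex mat" where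
  "diagm m d = mat m m (\<lambda>(i,j). if i = j then d i else 0)"

lemma diagm_carrier[simp]: "diagm m d \<in> carrier_mat m m" by (simp add: diagm_def)
lemma diagm_index[simp]: "i < m \<Longrightarrow> j < m \<Longrightarrow> diagm m d $$ (i,j) = (if i = j then d i else 0)"
  by (simp add: diagm_def)
lemma diagm_dims[simp]: "dim_row (diagm m d) = m" "dim_col (diagm m d) = m" by (simp_all add: diagm_def)

lemma B_diagm: "B m (diagm m (\<lambda>i. complex_of_real (q i))) w w = complex_of_real (\<Sum>i<m. q i * (cmod (w i))^2)"
proof -
  have "B m (diagm m (\<lambda>i. complex_of_real (q i))) w w = (\<Sum>i<m. \<Sum>j<m. if j = i then cnj (w i) * complex_of_real (q i) * w i else 0)"
    unfolding B_def by (intro sum.cong refl) auto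
  also have "\<dots> = (\<Sum>i<m. complex_of_real (q i) * (w i * cnj (w i)))" by (simp add: algebra_simps)
  also have "\<dots> = (\<Sum>i<m. complex_of_real (q i * (cmod (w i))^2))"
    by (simp only: of_real_mult complex_norm_square)
  finally show ?thesis by simp
qed

lemma psd_diagm: assumes "\<And>i. i < m \<Longrightarrow> q i \<ge> 0" shows "psd m (diagm m (\<lambda>i. complex_of_real (q i)))"
  unfolding psd_iff B_diagm using assms by (auto intro!: sum_nonneg)

lemma sq_entries: assumes "S \<in> carrier_mat m m" "i < m" "j < m"
  shows "(S * S) $$ (i,j) = (\<Sum>k<m. S $$ (i,k) * S $$ (k,j))"
  using assms by (simp add: scalar_prod_def lessThan_atLeast0)

lemma sqrt_unique:
  assumes S: "psd m S" and sq: "S * S = diagm m (\<lambda>i. complex_of_real (q i))"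
    and q: "\<And>i. i < m \<Longrightarrow> q i \<ge> 0"
  shows "S = diagm m (\<lambda>i. complex_of_real (sqrt (q i)))"
proof -
  have Sc: "S \<in> carrier_mat m m" using psdD(3)[OF S] .
  define s where "s i j = S $$ (i,j)" for i j
  have herm: "s j i = cnj (s i j)" if "i < m" "j < m" for i j
    unfolding s_def using psd_herm[OF S that] .
  have sqe: "(\<Sum>k<m. s i k * s k j) = (if i = j then complex_of_real (q i) else 0)" if "i < m" "j < m" for i j
    using sq_entries[OF Sc that, unfolded sq] that by (simp add: s_def)
  have comm: "s i j * complex_of_real (q j) = complex_of_real (q i) * s i j" if ij: "i < m" "j < m" for i j
  proof -
    have "(\<Sum>k<m. s i k * (\<Sum>l<m. s k l * s l j)) = (\<Sum>k<m. \<Sum>l<m. s i k * s k l * s l j)"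
      by (simp add: sum_distrib_left mult.assoc)
    also have "\<dots> = (\<Sum>l<m. \<Sum>k<m. s i k * s k l * s l j)" by (rule sum.swap)
    also have "\<dots> = (\<Sum>l<m. (\<Sum>k<m. s i k * s k l) * s l j)" by (simp add: sum_distrib_right)
    finally have "(\<Sum>k<m. s i k * (\<Sum>l<m. s k l * s l j)) = (\<Sum>l<m. (\<Sum>k<m. s i k * s k l) * s l j)" .
    moreover have "(\<Sum>k<m. s i k * (\<Sum>l<m. s k l * s l j)) = (\<Sum>k<m. if k = j then s i k * complex_of_real (q j) else 0)"
      by (intro sum.cong refl) (simp add: sqe ij)
    moreover have "(\<Sum>l<m. (\<Sum>k<m. s i k * s k l) * s l j) = (\<Sum>l<m. if l = i then complex_of_real (q i) * s l j else 0)"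
      by (intro sum.cong refl) (simp add: sqe ij)
    ultimately show ?thesis using ij by simp
  qed
  have comm2: "s i j * complex_of_real (sqrt (q j)) = complex_of_real (sqrt (q i)) * s i j" if ij: "i < m" "j < m" for i j
  proof (cases "s i j = 0")
    case False
    from comm[OF ij] False have "q j = q i" by simp
    thus ?thesis by (simp add: mult.commute)
  qed simp
  define r where "r i j = (if i = j then complex_of_real (sqrt (q i)) else 0)" for i j :: nat
  define e where "e i j = s i j - r i j" for i j
  have Z: "(\<Sum>k<m. (s i k + r i k) * e k j) = 0" if ij: "i < m" "j < m" for i j
  proof -
    have "(\<Sum>k<m. (s i k + r i k) * e k j) = (\<Sum>k<m. s i k * s k j) - (\<Sum>k<m. s i k * r k j)
       + (\<Sum>k<m. r i k * s k j) - (\<Sum>k<m. r i k * r k j)"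
      unfolding e_def by (simp add: algebra_simps sum.distrib sum_subtractf)
    also have "(\<Sum>k<m. s i k * r k j) = s i j * complex_of_real (sqrt (q j))"
      unfolding r_def using ij by (simp add: if_distrib cong: if_cong)
    also have "(\<Sum>k<m. r i k * s k j) = complex_of_real (sqrt (q i)) * s i j"
    proof -
      have "(\<Sum>k<m. r i k * s k j) = (\<Sum>k<m. if k = i then complex_of_real (sqrt (q i)) * s i j else 0)"
        by (intro sum.cong refl) (auto simp: r_def)
      thus ?thesis using ij by simp
    qed
    also have "(\<Sum>k<m. r i k * r k j) = (if i = j then complex_of_real (q i) else 0)"
    proof (cases "i = j")
      case True
      have "(\<Sum>k<m. r i k * r k j) = (\<Sum>k<m. if k = i then complex_of_real (q i) else 0)"
        by (intro sum.cong refl) (use True q[OF ij(1)] in \<open>auto simp: r_def simp flip: of_real_mult\<close>)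
      thus ?thesis using True ij by simp
    next
      case False
      have "(\<Sum>k<m. r i k * r k j) = (\<Sum>k<m. 0)"
        by (intro sum.cong refl) (use False in \<open>auto simp: r_def\<close>)
      thus ?thesis using False by simp
    qed
    finally show ?thesis using sqe[OF ij] comm2[OF ij] by simp
  qed
  define R where "R = diagm m (\<lambda>i. complex_of_real (sqrt (q i)))"
  have R: "psd m R" unfolding R_def by (rule psd_diagm) (simp add: q)
  have Rr: "R $$ (i,j) = r i j" if "i < m" "j < m" for i j using that by (simp add: R_def r_def)
  have key: "(\<Sum>l<m. e k l * e l j) = 0" if kj: "k < m" "j < m" for k j
  proof -
    define u where "u l = e l j" for l
    have u: "u l = (\<Sum>j'<m. e l j' * dl j j')" if "l < m" for l
      unfolding u_def dl_def using kj by (simp add: if_distrib cong: if_cong)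
    have "B m S u u + B m R u u = (\<Sum>i<m. \<Sum>l<m. cnj (u i) * ((s i l + r i l) * u l))"
      unfolding B_def sum.distrib[symmetric] by (intro sum.cong refl) (simp add: Rr s_def algebra_simps)
    also have "\<dots> = (\<Sum>i<m. cnj (u i) * (\<Sum>l<m. (s i l + r i l) * u l))"
      by (simp only: sum_distrib_left)
    also have "\<dots> = (\<Sum>i<m. cnj (u i) * (\<Sum>l<m. (s i l + r i l) * (\<Sum>j'<m. e l j' * dl j j')))"
      by (intro sum.cong refl) (simp add: u)
    also have "\<dots> = (\<Sum>i<m. cnj (u i) * (\<Sum>j'<m. (\<Sum>l<m. (s i l + r i l) * e l j') * dl j j'))"
    proof -
      have inner: "(\<Sum>l<m. (s i l + r i l) * (\<Sum>j'<m. e l j' * dl j j')) = (\<Sum>j'<m. (\<Sum>l<m. (s i l + r i l) * e l j') * dl j j')" for i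
      proof -
        have "(\<Sum>l<m. (s i l + r i l) * (\<Sum>j'<m. e l j' * dl j j')) = (\<Sum>l<m. \<Sum>j'<m. (s i l + r i l) * e l j' * dl j j')"
          by (simp add: sum_distrib_left mult.assoc)
        also have "\<dots> = (\<Sum>j'<m. \<Sum>l<m. (s i l + r i l) * e l j' * dl j j')" by (rule sum.swap)
        also have "\<dots> = (\<Sum>j'<m. (\<Sum>l<m. (s i l + r i l) * e l j') * dl j j')" by (simp add: sum_distrib_right)
        finally show ?thesis .
      qed
      show ?thesis by (simp only: inner)
    qed
    also have "\<dots> = 0" by (simp add: Z)
    finally have sum0: "B m S u u + B m R u u = 0" .
    have "Re (B m S u u) \<ge> 0" "Re (B m R u u) \<ge> 0" "Im (B m S u u) = 0" "Im (B m R u u) = 0"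
      using psdD[OF S] psdD[OF R] by auto
    with sum0 have z: "B m S u u = 0" "B m R u u = 0"
      by (auto simp: complex_eq_iff)
    have "(\<Sum>l<m. S $$ (k,l) * u l) = 0" by (rule psd_kernel[OF S z(1) kj(1)])
    moreover have "(\<Sum>l<m. R $$ (k,l) * u l) = 0" by (rule psd_kernel[OF R z(2) kj(1)])
    ultimately have z2: "(\<Sum>l<m. s k l * u l) - (\<Sum>l<m. r k l * u l) = 0"
      using kj by (simp add: s_def Rr)
    have "(\<Sum>l<m. e k l * e l j) = (\<Sum>l<m. s k l * u l - r k l * u l)"
      unfolding u_def e_def by (intro sum.cong refl) (simp add: algebra_simps)
    also have "\<dots> = (\<Sum>l<m. s k l * u l) - (\<Sum>l<m. r k l * u l)" by (rule sum_subtractf)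
    finally show ?thesis using z2 by simp
  qed
  have eherm: "e l k = cnj (e k l)" if "k < m" "l < m" for k l
    unfolding e_def r_def using herm[OF that] by auto
  have e0: "e k l = 0" if kl: "k < m" "l < m" for k l
  proof -
    have "(\<Sum>l<m. e k l * cnj (e k l)) = 0" using key[OF kl(1) kl(1)] eherm[OF kl(1)] by simp
    hence "(\<Sum>l<m. complex_of_real ((cmod (e k l))^2)) = 0" by (simp only: complex_norm_square)
    hence "complex_of_real (\<Sum>l<m. (cmod (e k l))^2) = 0" by (simp only: of_real_sum)
    hence "(\<Sum>l<m. (cmod (e k l))^2) = 0" by (simp only: of_real_eq_0_iff)
    hence "\<forall>l\<in>{..<m}. (cmod (e k l))^2 = 0" by (subst (asm) sum_nonneg_eq_0_iff) auto
    thus ?thesis using kl by simp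
  qed
  show ?thesis
    by (rule eq_matI) (use Sc e0 in \<open>auto simp: e_def s_def r_def\<close>)
qed

lemma trace_norm_diag:
  assumes D: "D \<in> carrier_mat m m" and dg: "\<And>i j. i < m \<Longrightarrow> j < m \<Longrightarrow> i \<noteq> j \<Longrightarrow> D $$ (i,j) = 0"
  shows "trace_norm D = (\<Sum>i<m. cmod (D $$ (i,i)))"
proof -
  define q where "q i = (cmod (D $$ (i,i)))^2" for i
  have nsq: "cnj z * z = complex_of_real ((cmod z)^2)" for z
    by (simp only: complex_norm_square mult.commute)
  have A: "adj D * D = diagm m (\<lambda>i. complex_of_real (q i))"
  proof (rule eq_matI)
    fix i j assume ij: "i < dim_row (diagm m (\<lambda>i. complex_of_real (q i)))" "j < dim_col (diagm m (\<lambda>i. complex_of_real (q i)))"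
    hence ij': "i < m" "j < m" by auto
    have "(adj D * D) $$ (i,j) = (\<Sum>k<m. cnj (D $$ (k,i)) * D $$ (k,j))"
      using D ij' by (simp add: adj_def scalar_prod_def lessThan_atLeast0)
    also have "\<dots> = (\<Sum>k<m. if k = i \<and> k = j then cnj (D $$ (i,i)) * D $$ (i,i) else 0)"
      by (intro sum.cong refl) (use dg ij' in auto)
    also have "\<dots> = (if i = j then complex_of_real (q i) else 0)"
    proof (cases "i = j")
      case True thus ?thesis using ij' by (simp add: q_def nsq)
    next
      case False
      have "(\<Sum>k<m. if k = i \<and> k = j then cnj (D $$ (i,i)) * D $$ (i,i) else 0) = (\<Sum>k<m. 0)"
        by (intro sum.cong refl) (use False in auto)
      thus ?thesis using False by simp
    qed
    finally show "(adj D * D) $$ (i,j) = diagm m (\<lambda>i. complex_of_real (q i)) $$ (i,j)" using ij' by simp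
  qed (use D in \<open>auto simp: adj_def\<close>)
  have dr: "dim_row (adj D * D) = m" using D by (simp add: adj_def)
  have q0: "\<And>i. q i \<ge> 0" by (simp add: q_def)
  have "psd_sqrt (adj D * D) = diagm m (\<lambda>i. complex_of_real (sqrt (q i)))"
    unfolding psd_sqrt_def A diagm_dims
  proof (rule the_equality)
    show "psd m (diagm m (\<lambda>i. complex_of_real (sqrt (q i)))) \<and>
      diagm m (\<lambda>i. complex_of_real (sqrt (q i))) * diagm m (\<lambda>i. complex_of_real (sqrt (q i))) = diagm m (\<lambda>i. complex_of_real (q i))"
    proof
      show "psd m (diagm m (\<lambda>i. complex_of_real (sqrt (q i))))" by (rule psd_diagm) (simp add: q0)
      show "diagm m (\<lambda>i. complex_of_real (sqrt (q i))) * diagm m (\<lambda>i. complex_of_real (sqrt (q i))) = diagm m (\<lambda>i. complex_of_real (q i))"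
      proof (rule eq_matI)
        fix i j assume "i < dim_row (diagm m (\<lambda>i. complex_of_real (q i)))" "j < dim_col (diagm m (\<lambda>i. complex_of_real (q i)))"
        hence ij: "i < m" "j < m" by auto
        have "(diagm m (\<lambda>i. complex_of_real (sqrt (q i))) * diagm m (\<lambda>i. complex_of_real (sqrt (q i)))) $$ (i,j)
           = (\<Sum>k<m. diagm m (\<lambda>i. complex_of_real (sqrt (q i))) $$ (i,k) * diagm m (\<lambda>i. complex_of_real (sqrt (q i))) $$ (k,j))"
          by (rule sq_entries[OF diagm_carrier ij])
        also have "\<dots> = (\<Sum>k<m. if k = i \<and> i = j then complex_of_real (q i) else 0)"
          by (intro sum.cong refl) (use ij q0 in \<open>auto simp flip: of_real_mult\<close>)
        also have "\<dots> = (if i = j then complex_of_real (q i) else 0)"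
          using ij by (cases "i = j") auto
        finally show "(diagm m (\<lambda>i. complex_of_real (sqrt (q i))) * diagm m (\<lambda>i. complex_of_real (sqrt (q i)))) $$ (i,j) = diagm m (\<lambda>i. complex_of_real (q i)) $$ (i,j)"
          using ij by simp
      qed auto
    qed
  next
    fix S assume "psd m S \<and> S * S = diagm m (\<lambda>i. complex_of_real (q i))"
    thus "S = diagm m (\<lambda>i. complex_of_real (sqrt (q i)))" using sqrt_unique q0 by blast
  qed
  hence "trace_norm D = Re (\<Sum>i<m. complex_of_real (sqrt (q i)))"
    unfolding trace_norm_def mtrace_def by simp
  also have "\<dots> = (\<Sum>i<m. cmod (D $$ (i,i)))" by (simp add: q_def Re_sum)
  finally show ?thesis .
qed

lemma proj_carrier[simp]: "v \<in> carrier_vec n \<Longrightarrow> proj v \<in> carrier_mat n n"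
  by (simp add: proj_def)

lemma proj_index[simp]: "i < dim_vec v \<Longrightarrow> j < dim_vec v \<Longrightarrow> proj v $$ (i,j) = v $ i * cnj (v $ j)"
  by (simp add: proj_def)

lemma mult_cnj_norm: "z * cnj z = complex_of_real ((cmod z)^2)"
  by (simp only: complex_norm_square)

lemma Re_mtrace_proj: assumes "v \<in> carrier_vec n" shows "Re (mtrace (proj v)) = (\<Sum>i<n. (cmod (v $ i))^2)"
proof -
  have "mtrace (proj v) = (\<Sum>i<n. complex_of_real ((cmod (v $ i))^2))"
    using assms unfolding mtrace_def by (intro sum.cong) (auto simp: proj_def mult_cnj_norm)
  thus ?thesis by (simp add: Re_sum)
qed

lemma zero_mat_l:
  fixes l :: "complex mat \<Rightarrow> complex"
  assumes hom: "\<And>X a. X \<in> carrier_mat n n \<Longrightarrow> l (a \<cdot>\<^sub>m X) = a * l X"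
    and X: "X \<in> carrier_mat n n" and z: "\<And>i j. i < n \<Longrightarrow> j < n \<Longrightarrow> X $$ (i,j) = 0"
  shows "l X = 0"
proof -
  have "X = 0 \<cdot>\<^sub>m X" by (rule eq_matI) (use X z in auto)
  hence "l X = 0 * l X" using hom[OF X, of 0] by simp
  thus ?thesis by simp
qed

definition Eij :: "nat \<Rightarrow> nat \<Rightarrow> nat \<Rightarrow> complex mat" where
  "Eij n i j = mat n n (\<lambda>(a,b). if a = i \<and> b = j then 1 else 0)"

lemma lin_expand:
  fixes l :: "complex mat \<Rightarrow> complex"
  assumes add: "\<And>X Y. X \<in> carrier_mat n n \<Longrightarrow> Y \<in> carrier_mat n n \<Longrightarrow> l (X + Y) = l X + l Y"
    and hom: "\<And>X a. X \<in> carrier_mat n n \<Longrightarrow> l (a \<cdot>\<^sub>m X) = a * l X"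
    and X: "X \<in> carrier_mat n n"
  shows "l X = (\<Sum>i<n. \<Sum>j<n. X $$ (i,j) * l (Eij n i j))"
proof -
  define Xr where "Xr A = mat n n (\<lambda>(a,b). if (a,b) \<in> A then X $$ (a,b) else 0)" for A
  have Xr_c: "Xr A \<in> carrier_mat n n" for A by (simp add: Xr_def)
  have "finite A \<Longrightarrow> l (Xr A) = (\<Sum>p\<in>A. X $$ p * l (Eij n (fst p) (snd p)))" for A
  proof (induction A rule: finite_induct)
    case empty
    have "Xr {} $$ (i,j) = 0" if "i < n" "j < n" for i j using that unfolding Xr_def by simp
    hence "l (Xr {}) = 0" by (intro zero_mat_l[OF hom Xr_c]) auto
    thus ?case by simp
  next
    case (insert p A)
    have "Xr (insert p A) = Xr A + X $$ p \<cdot>\<^sub>m Eij n (fst p) (snd p)"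
      by (rule eq_matI) (use insert(2) in \<open>auto simp: Xr_def Eij_def\<close>)
    hence "l (Xr (insert p A)) = l (Xr A) + X $$ p * l (Eij n (fst p) (snd p))"
      using add[OF Xr_c, of "X $$ p \<cdot>\<^sub>m Eij n (fst p) (snd p)"] hom[of "Eij n (fst p) (snd p)"]
      by (simp add: Eij_def)
    thus ?case using insert by simp
  qed
  hence "l (Xr ({..<n} \<times> {..<n})) = (\<Sum>p\<in>{..<n} \<times> {..<n}. X $$ p * l (Eij n (fst p) (snd p)))" by simp
  moreover have "Xr ({..<n} \<times> {..<n}) = X" by (rule eq_matI) (use X in \<open>auto simp: Xr_def\<close>)
  ultimately show ?thesis by (simp add: sum.cartesian_product split_beta)
qed

lemma proj_smult: assumes "v \<in> carrier_vec n" "c \<noteq> 0"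
  shows "proj v = complex_of_real (c^2) \<cdot>\<^sub>m proj (vec n (\<lambda>i. v $ i / complex_of_real c))"
  by (rule eq_matI) (use assms in \<open>auto simp: proj_def power2_eq_square field_simps\<close>)

lemma proj_bound:
  fixes l :: "nat \<Rightarrow> complex mat \<Rightarrow> complex"
  assumes hom: "\<And>b X a. X \<in> carrier_mat n n \<Longrightarrow> l b (a \<cdot>\<^sub>m X) = a * l b X"
    and bound: "\<And>\<phi>. pure_state n \<phi> \<Longrightarrow> (\<Sum>b<m. cmod (l b (proj \<phi>))) \<le> M"
    and v: "v \<in> carrier_vec n"
  shows "(\<Sum>b<m. cmod (l b (proj v))) \<le> Re (mtrace (proj v)) * M"
proof -
  define nv where "nv = sqrt (\<Sum>i<n. (cmod (v $ i))^2)"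
  have tr: "Re (mtrace (proj v)) = nv^2" unfolding nv_def Re_mtrace_proj[OF v]
    by (simp add: sum_nonneg)
  show ?thesis
  proof (cases "nv = 0")
    case True
    hence "(\<Sum>i<n. (cmod (v $ i))^2) = 0" unfolding nv_def by simp
    hence "\<forall>i\<in>{..<n}. (cmod (v $ i))^2 = 0" by (subst (asm) sum_nonneg_eq_0_iff) auto
    hence z: "\<And>i. i < n \<Longrightarrow> v $ i = 0" by simp
    have "l b (proj v) = 0" for b
      by (rule zero_mat_l[OF hom proj_carrier[OF v]]) (use v z in auto)
    thus ?thesis using True tr by simp
  next
    case False
    define \<phi> where "\<phi> = vec n (\<lambda>i. v $ i / complex_of_real nv)"
    have pe: "proj v = complex_of_real (nv^2) \<cdot>\<^sub>m proj \<phi>" unfolding \<phi>_def by (rule proj_smult[OF v False])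
    have pc: "proj \<phi> \<in> carrier_mat n n" by (simp add: \<phi>_def)
    have "conjugate \<phi> \<bullet> \<phi> = (\<Sum>i<n. complex_of_real ((cmod (v $ i))^2 / nv^2))"
      unfolding \<phi>_def scalar_prod_def
      by (auto simp: lessThan_atLeast0 power2_eq_square complex_norm_square[symmetric] field_simps intro!: sum.cong)
    also have "\<dots> = complex_of_real ((\<Sum>i<n. (cmod (v $ i))^2) / nv^2)"
      by (simp add: sum_divide_distrib)
    also have "\<dots> = 1" using False unfolding nv_def by (simp add: sum_nonneg)
    finally have pure: "pure_state n \<phi>" unfolding pure_state_def by (simp add: \<phi>_def)
    have "(\<Sum>b<m. cmod (l b (proj v))) = (\<Sum>b<m. nv^2 * cmod (l b (proj \<phi>)))"
      unfolding pe hom[OF pc] by (simp add: norm_mult norm_power)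
    also have "\<dots> = nv^2 * (\<Sum>b<m. cmod (l b (proj \<phi>)))" by (simp add: sum_distrib_left)
    also have "\<dots> \<le> nv^2 * M" by (rule mult_left_mono[OF bound[OF pure]]) simp
    finally show ?thesis using tr by (simp add: mult.commute)
  qed
qed

lemma proj_dims[simp]: "dim_row (proj v) = dim_vec v" "dim_col (proj v) = dim_vec v"
  by (simp_all add: proj_def)

lemma sum_dl: "j < n \<Longrightarrow> (\<Sum>k<n. f k * dl j k) = f j"
proof -
  assume j: "j < n"
  have "(\<Sum>k<n. f k * dl j k) = (\<Sum>k<n. if k = j then f j else 0)"
    by (intro sum.cong refl) (auto simp: dl_def)
  thus ?thesis using j by simp
qed

lemma psd_zero_diag_col:
  assumes Xp: "psd n X" and i: "i < n" and z: "X $$ (i,i) = 0" and k: "k < n"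
  shows "X $$ (k,i) = 0" "X $$ (i,k) = 0"
proof -
  have "B n X (dl i) (dl i) = 0" using B_dl_dl[OF i i] z by simp
  from psd_kernel[OF Xp this k] have "(\<Sum>j<n. X $$ (k,j) * dl i j) = 0" .
  thus c: "X $$ (k,i) = 0" using sum_dl[OF i] by simp
  show "X $$ (i,k) = 0" using psd_herm[OF Xp k i] c by simp
qed

lemma psd_bound:
  fixes l :: "nat \<Rightarrow> complex mat \<Rightarrow> complex"
  assumes add: "\<And>b X Y. X \<in> carrier_mat n n \<Longrightarrow> Y \<in> carrier_mat n n \<Longrightarrow> l b (X + Y) = l b X + l b Y"
    and hom: "\<And>b X a. X \<in> carrier_mat n n \<Longrightarrow> l b (a \<cdot>\<^sub>m X) = a * l b X"
    and bound: "\<And>\<phi>. pure_state n \<phi> \<Longrightarrow> (\<Sum>b<m. cmod (l b (proj \<phi>))) \<le> M"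
    and X: "psd n X"
  shows "(\<Sum>b<m. cmod (l b X)) \<le> Re (mtrace X) * M"
proof -
  have P: "\<forall>X. psd n X \<longrightarrow> (\<forall>i. k \<le> i \<longrightarrow> i < n \<longrightarrow> X $$ (i,i) = 0) \<longrightarrow>
      (\<Sum>b<m. cmod (l b X)) \<le> Re (mtrace X) * M" for k
  proof (induction k)
    case 0
    show ?case
    proof (intro allI impI)
      fix X assume Xp: "psd n X" and z: "\<forall>i. 0 \<le> i \<longrightarrow> i < n \<longrightarrow> X $$ (i,i) = 0"
      have Xc: "X \<in> carrier_mat n n" using psdD(3)[OF Xp] .
      have ent: "X $$ (i,j) = 0" if "i < n" "j < n" for i j
        using psd_zero_diag_col(1)[OF Xp that(2) _ that(1)] z that by simp
      have "l b X = 0" for b by (rule zero_mat_l[where l="l b"]) (use hom Xc ent in auto)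
      moreover have "mtrace X = 0" unfolding mtrace_def using Xc ent by simp
      ultimately show "(\<Sum>b<m. cmod (l b X)) \<le> Re (mtrace X) * M" by simp
    qed
  next
    case (Suc k)
    show ?case
    proof (intro allI impI)
      fix X assume Xp: "psd n X" and z: "\<forall>i. Suc k \<le> i \<longrightarrow> i < n \<longrightarrow> X $$ (i,i) = 0"
      have Xc: "X \<in> carrier_mat n n" using psdD(3)[OF Xp] .
      show "(\<Sum>b<m. cmod (l b X)) \<le> Re (mtrace X) * M"
      proof (cases "k < n \<and> X $$ (k,k) \<noteq> 0")
        case False
        have "\<forall>i. k \<le> i \<longrightarrow> i < n \<longrightarrow> X $$ (i,i) = 0"
        proof (intro allI impI)
          fix i assume "k \<le> i" "i < n"
          thus "X $$ (i,i) = 0" using z False by (cases "i = k") auto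
        qed
        thus ?thesis using Suc.IH Xp by blast
      next
        case True
        hence k: "k < n" and nz: "X $$ (k,k) \<noteq> 0" by auto
        define a where "a = Re (X $$ (k,k))"
        have Xkk: "X $$ (k,k) = complex_of_real a"
          using psd_diag_real(1)[OF Xp k] unfolding a_def by (simp add: complex_eq_iff)
        have "a \<noteq> 0" using nz Xkk by auto
        moreover have "a \<ge> 0" using psd_diag_real(2)[OF Xp k] unfolding a_def .
        ultimately have apos: "a > 0" by simp
        have sa: "complex_of_real (sqrt a) * complex_of_real (sqrt a) = complex_of_real a"
          using apos by (simp flip: of_real_mult)
        define v where "v = vec n (\<lambda>i. X $$ (i,k) / complex_of_real (sqrt a))"
        define X' where "X' = mat n n (\<lambda>(i,j). X $$ (i,j) - X $$ (i,k) * cnj (X $$ (j,k)) / complex_of_real a)"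
        have vc: "v \<in> carrier_vec n" by (simp add: v_def)
        have X'c: "X' \<in> carrier_mat n n" by (simp add: X'_def)
        have X'i: "X' $$ (i,j) = X $$ (i,j) - X $$ (i,k) * cnj (X $$ (j,k)) / complex_of_real a" if "i < n" "j < n" for i j
          using that by (simp add: X'_def)
        have decomp: "X = X' + proj v"
        proof (rule eq_matI)
          fix i j assume ij: "i < dim_row (X' + proj v)" "j < dim_col (X' + proj v)"
          hence ij': "i < n" "j < n" using vc by (auto simp: proj_def)
          have "proj v $$ (i,j) = X $$ (i,k) * cnj (X $$ (j,k)) / (complex_of_real (sqrt a) * complex_of_real (sqrt a))"
            using ij' by (simp add: v_def)
          also have "\<dots> = X $$ (i,k) * cnj (X $$ (j,k)) / complex_of_real a" unfolding sa ..
          finally show "X $$ (i,j) = (X' + proj v) $$ (i,j)" using ij' vc by (simp add: X'i)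
        qed (use Xc vc in auto)
        have X'psd: "psd n X'"
          unfolding psd_iff
        proof (intro conjI allI X'c)
          fix w :: "nat \<Rightarrow> complex"
          define s where "s = (\<Sum>i<n. cnj (w i) * X $$ (i,k))"
          have cs: "cnj s = (\<Sum>j<n. cnj (X $$ (j,k)) * w j)" unfolding s_def by (simp add: mult.commute)
          have "B n X' w w = (\<Sum>i<n. \<Sum>j<n. cnj (w i) * X $$ (i,j) * w j - cnj (w i) * X $$ (i,k) * (cnj (X $$ (j,k)) * w j) / complex_of_real a)"
            unfolding B_def by (intro sum.cong refl) (simp add: X'i algebra_simps)
          also have "\<dots> = B n X w w - (\<Sum>i<n. \<Sum>j<n. cnj (w i) * X $$ (i,k) * (cnj (X $$ (j,k)) * w j)) / complex_of_real a"
            unfolding B_def by (simp add: sum_subtractf sum_divide_distrib)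
          also have "(\<Sum>i<n. \<Sum>j<n. cnj (w i) * X $$ (i,k) * (cnj (X $$ (j,k)) * w j)) = s * cnj s"
            unfolding cs unfolding s_def sum_product by (rule refl)
          finally have e1: "B n X' w w = B n X w w - s * cnj s / complex_of_real a" .
          define \<alpha> where "\<alpha> = - cnj s / complex_of_real a"
          have b1: "B n X w (dl k) = s" unfolding B_dl_right[OF k] s_def ..
          have b2: "B n X (dl k) w = cnj s" unfolding B_dl_left[OF k] cs
            by (intro sum.cong refl) (simp add: psd_herm[OF Xp k])
          have "B n X (\<lambda>i. w i + \<alpha> * dl k i) (\<lambda>i. w i + \<alpha> * dl k i)
              = B n X w w + \<alpha> * B n X w (dl k) + cnj \<alpha> * B n X (dl k) w + cnj \<alpha> * \<alpha> * X $$ (k,k)"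
            by (simp add: B_add_left B_add_right B_smult_left B_smult_right B_dl_dl k algebra_simps)
          also have "\<dots> = B n X w w - s * cnj s / complex_of_real a"
            unfolding b1 b2 Xkk \<alpha>_def using apos by (simp add: field_simps power2_eq_square)
          finally have "B n X' w w = B n X (\<lambda>i. w i + \<alpha> * dl k i) (\<lambda>i. w i + \<alpha> * dl k i)" using e1 by simp
          thus "Im (B n X' w w) = 0" "Re (B n X' w w) \<ge> 0" using psdD[OF Xp] by auto
        qed
        have X'z: "\<forall>i. k \<le> i \<longrightarrow> i < n \<longrightarrow> X' $$ (i,i) = 0"
        proof (intro allI impI)
          fix i assume ki: "k \<le> i" and i: "i < n"
          show "X' $$ (i,i) = 0"
          proof (cases "i = k")
            case True
            thus ?thesis using i apos by (simp add: X'i Xkk power2_eq_square field_simps)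
          next
            case False
            hence "X $$ (i,i) = 0" using z ki i by auto
            hence "X $$ (i,k) = 0" using psd_zero_diag_col(2)[OF Xp i _ k] by simp
            thus ?thesis using i \<open>X $$ (i,i) = 0\<close> by (simp add: X'i)
          qed
        qed
        have IH: "(\<Sum>b<m. cmod (l b X')) \<le> Re (mtrace X') * M" using Suc.IH X'psd X'z by blast
        have PB: "(\<Sum>b<m. cmod (l b (proj v))) \<le> Re (mtrace (proj v)) * M"
          by (rule proj_bound[OF hom bound vc])
        have "(\<Sum>b<m. cmod (l b X)) = (\<Sum>b<m. cmod (l b X' + l b (proj v)))"
          by (subst decomp, simp add: add[OF X'c proj_carrier[OF vc]])
        also have "\<dots> \<le> (\<Sum>b<m. cmod (l b X') + cmod (l b (proj v)))"
          by (intro sum_mono norm_triangle_ineq)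
        also have "\<dots> = (\<Sum>b<m. cmod (l b X')) + (\<Sum>b<m. cmod (l b (proj v)))" by (rule sum.distrib)
        also have "\<dots> \<le> Re (mtrace X') * M + Re (mtrace (proj v)) * M" using IH PB by simp
        also have "\<dots> = Re (mtrace X) * M"
        proof -
          have "mtrace X = mtrace X' + mtrace (proj v)"
            by (subst decomp) (use X'c vc in \<open>simp add: mtrace_def sum.distrib\<close>)
          thus ?thesis by (simp add: algebra_simps)
        qed
        finally show ?thesis .
      qed
    qed
  qed
  from P[of n] X show ?thesis by auto
qed

lemma cont_coord[continuous_intros]: "continuous_on S (\<lambda>x::'a \<Rightarrow> 'b::topological_space. x i)"
  by (rule continuous_on_subset[OF continuous_on_product_coordinates]) simp

lemma cnj_mult_norm: "cnj z * z = complex_of_real ((cmod z)^2)"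
  by (metis complex_norm_square mult.commute)

lemma self_sprod: assumes "\<phi> \<in> carrier_vec n"
  shows "conjugate \<phi> \<bullet> \<phi> = complex_of_real (\<Sum>i<n. (cmod (\<phi> $ i))^2)"
proof -
  have "conjugate \<phi> \<bullet> \<phi> = (\<Sum>i<n. cnj (\<phi> $ i) * \<phi> $ i)"
    using assms unfolding scalar_prod_def by (auto simp: lessThan_atLeast0 intro!: sum.cong)
  also have "\<dots> = (\<Sum>i<n. complex_of_real ((cmod (\<phi> $ i))^2))"
    by (intro sum.cong refl) (rule cnj_mult_norm)
  also have "\<dots> = complex_of_real (\<Sum>i<n. (cmod (\<phi> $ i))^2)" by (simp only: of_real_sum)
  finally show ?thesis .
qed

lemma compact_cball_complex: "compact (cball (0::complex) 1)"
proof -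
  have "cball (0::complex) 1 = (\<lambda>p. complex_of_real (fst p) + \<i> * complex_of_real (snd p)) ` cball (0::real\<times>real) 1"
  proof (rule subset_antisym; rule subsetI)
    fix z :: complex assume "z \<in> cball 0 1"
    hence "norm (Re z, Im z) \<le> 1" by (simp add: norm_Pair cmod_def)
    moreover have "z = complex_of_real (fst (Re z, Im z)) + \<i> * complex_of_real (snd (Re z, Im z))"
      by (simp add: complex_eq_iff)
    ultimately show "z \<in> (\<lambda>p. complex_of_real (fst p) + \<i> * complex_of_real (snd p)) ` cball (0::real\<times>real) 1"
      by (intro image_eqI[where x="(Re z, Im z)"]) auto
  next
    fix z :: complex assume "z \<in> (\<lambda>p. complex_of_real (fst p) + \<i> * complex_of_real (snd p)) ` cball (0::real\<times>real) 1"
    then obtain a b where "norm (a,b) \<le> 1" "z = complex_of_real a + \<i> * complex_of_real b" by auto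
    thus "z \<in> cball 0 1" by (simp add: norm_Pair cmod_def)
  qed
  moreover have "compact ((\<lambda>p. complex_of_real (fst p) + \<i> * complex_of_real (snd p)) ` cball (0::real\<times>real) 1)"
    by (intro compact_continuous_image continuous_intros compact_cball)
  ultimately show ?thesis by simp
qed

lemma exists_max_pure:
  fixes F :: "complex vec \<Rightarrow> real"
  assumes n: "n > 0" and cont: "continuous_on UNIV (\<lambda>x::nat\<Rightarrow>complex. F (vec n x))"
  shows "\<exists>\<psi>. pure_state n \<psi> \<and> (\<forall>\<phi>. pure_state n \<phi> \<longrightarrow> F \<phi> \<le> F \<psi>)"
proof -
  define S' where "S' i = (if i < n then cball (0::complex) 1 else {0})" for i
  define S where "S = PiE UNIV S' \<inter> {x. (\<Sum>i<n. (cmod (x i))^2) = 1}"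
  have "compactin (product_topology (\<lambda>i. euclidean) UNIV) (PiE UNIV S')"
    unfolding compactin_PiE by (auto simp: S'_def compactin_euclidean_iff compact_cball_complex)
  hence c1: "compact (PiE UNIV S')" by (simp add: euclidean_product_topology compactin_euclidean_iff)
  have c2: "closed {x::nat\<Rightarrow>complex. (\<Sum>i<n. (cmod (x i))^2) = 1}"
    by (intro closed_Collect_eq continuous_intros)
  have cS: "compact S" unfolding S_def by (rule compact_Int_closed[OF c1 c2])
  define x1 where "x1 i = (if i = 0 then 1 else 0 :: complex)" for i :: nat
  have "(\<Sum>i<n. (cmod (x1 i))^2) = (\<Sum>i<n. if i = 0 then 1 else 0)"
    by (intro sum.cong refl) (simp add: x1_def)
  also have "\<dots> = 1" using n by simp
  finally have "x1 \<in> S" unfolding S_def S'_def using n by (auto simp: x1_def PiE_iff)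
  hence neS: "S \<noteq> {}" by auto
  have "continuous_on S (\<lambda>x. F (vec n x))" by (rule continuous_on_subset[OF cont]) simp
  from continuous_attains_sup[OF cS neS this]
  obtain x0 where x0: "x0 \<in> S" and mx: "\<And>y. y \<in> S \<Longrightarrow> F (vec n y) \<le> F (vec n x0)" by blast
  define \<psi> where "\<psi> = vec n x0"
  have "(\<Sum>i<n. (cmod (x0 i))^2) = 1" using x0 unfolding S_def by simp
  hence "pure_state n \<psi>" unfolding pure_state_def \<psi>_def
    by (simp add: self_sprod[of _ n])
  moreover have "F \<phi> \<le> F \<psi>" if \<phi>: "pure_state n \<phi>" for \<phi>
  proof -
    have \<phi>c: "\<phi> \<in> carrier_vec n" using \<phi> by (simp add: pure_state_def)
    have s1: "(\<Sum>i<n. (cmod (\<phi> $ i))^2) = 1"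
      using \<phi> self_sprod[OF \<phi>c] unfolding pure_state_def by (metis of_real_eq_1_iff)
    define y where "y i = (if i < n then \<phi> $ i else 0)" for i
    have le1: "cmod (\<phi> $ i) \<le> 1" if "i < n" for i
    proof -
      have "(cmod (\<phi> $ i))^2 \<le> (\<Sum>i<n. (cmod (\<phi> $ i))^2)"
        by (rule member_le_sum) (use that in auto)
      hence "(cmod (\<phi> $ i))^2 \<le> 1^2" using s1 by simp
      thus ?thesis by (rule power2_le_imp_le) simp
    qed
    have "(\<Sum>i<n. (cmod (y i))^2) = (\<Sum>i<n. (cmod (\<phi> $ i))^2)"
      by (intro sum.cong refl) (simp add: y_def)
    hence "y \<in> S" unfolding S_def S'_def using s1 le1 by (auto simp: y_def PiE_iff)
    moreover have "vec n y = \<phi>" by (rule eq_vecI) (use \<phi>c in \<open>auto simp: y_def\<close>)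
    ultimately show ?thesis using mx[of y] by (simp add: \<psi>_def)
  qed
  ultimately show ?thesis by blast
qed

lemma B_alt: "B n M u w = (\<Sum>i<n. cnj (u i) * (\<Sum>j<n. M $$ (i,j) * w j))"
  unfolding B_def by (simp add: sum_distrib_left mult.assoc)

lemma sum_mult_prod: "sum h {..<P * Q} = (\<Sum>i<P. \<Sum>j<Q. h (j + i * (Q::nat)))"
proof -
  have "sum h {i*Q..<i*Q+Q} = (\<Sum>j<Q. h (j + i*Q))" for i
  proof -
    have "sum h {i*Q..<i*Q+Q} = sum h {0 + i*Q..<Q + i*Q}" by (simp add: add.commute)
    also have "\<dots> = sum (\<lambda>j. h (j + i*Q)) {0..<Q}" by (rule sum.shift_bounds_nat_ivl)
    finally show ?thesis by (simp add: atLeast0LessThan)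
  qed
  hence "(\<Sum>i<P. \<Sum>j<Q. h (j + i*Q)) = (\<Sum>i<P. sum h {i*Q..<i*Q+Q})" by simp
  also have "\<dots> = sum h {..<P*Q}" by (rule sum.nat_group)
  finally show ?thesis by simp
qed

lemma sum_reindex_sel:
  assumes c: "c < (d::nat)"
  shows "(\<Sum>k<m*d. if k mod d = c then g k else 0) = (\<Sum>a<m. g (a*d + c))"
proof -
  have "(\<Sum>k<m*d. if k mod d = c then g k else 0) = (\<Sum>a<m. \<Sum>j<d. if (j + a*d) mod d = c then g (j + a*d) else 0)"
    by (rule sum_mult_prod[of "\<lambda>k. if k mod d = c then g k else 0" m d])
  also have "\<dots> = (\<Sum>a<m. \<Sum>j<d. if j = c then g (a*d + c) else 0)"
    by (intro sum.cong refl) (auto simp: add.commute)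
  also have "\<dots> = (\<Sum>a<m. g (a*d + c))" using c by simp
  finally show ?thesis .
qed

lemma block_dims[simp]: "dim_row (block dA dC c c' \<sigma>) = dA" "dim_col (block dA dC c c' \<sigma>) = dA"
  by (simp_all add: block_def)

lemma block_index[simp]: "a < dA \<Longrightarrow> a' < dA \<Longrightarrow> block dA dC c c' \<sigma> $$ (a,a') = \<sigma> $$ (a * dC + c, a' * dC + c')"
  by (simp add: block_def)

lemma block_carrier[simp]: "block dA dC c c' \<sigma> \<in> carrier_mat dA dA"
  by (simp add: block_def)

lemma psd_block:
  assumes p: "psd (dA*dC) \<sigma>" and c: "c < dC"
  shows "psd dA (block dA dC c c \<sigma>)"
  unfolding psd_iff
proof (intro conjI allI block_carrier)
  fix w :: "nat \<Rightarrow> complex"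
  define w' where "w' k = (if k mod dC = c then w (k div dC) else 0)" for k
  have inner: "(\<Sum>l<dA*dC. \<sigma> $$ (k,l) * w' l) = (\<Sum>a'<dA. \<sigma> $$ (k, a'*dC + c) * w a')" for k
  proof -
    have "(\<Sum>l<dA*dC. \<sigma> $$ (k,l) * w' l) = (\<Sum>l<dA*dC. if l mod dC = c then \<sigma> $$ (k,l) * w (l div dC) else 0)"
      by (intro sum.cong refl) (simp add: w'_def)
    also have "\<dots> = (\<Sum>a'<dA. \<sigma> $$ (k, a'*dC + c) * w ((a'*dC + c) div dC))" by (rule sum_reindex_sel[OF c])
    also have "\<dots> = (\<Sum>a'<dA. \<sigma> $$ (k, a'*dC + c) * w a')" using c by simp
    finally show ?thesis .
  qed
  have "B (dA*dC) \<sigma> w' w' = (\<Sum>k<dA*dC. if k mod dC = c then cnj (w (k div dC)) * (\<Sum>a'<dA. \<sigma> $$ (k, a'*dC + c) * w a') else 0)"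
    unfolding B_alt inner by (intro sum.cong refl) (simp add: w'_def)
  also have "\<dots> = (\<Sum>a<dA. cnj (w ((a*dC+c) div dC)) * (\<Sum>a'<dA. \<sigma> $$ (a*dC+c, a'*dC + c) * w a'))"
    by (rule sum_reindex_sel[OF c])
  also have "\<dots> = B dA (block dA dC c c \<sigma>) w w"
    unfolding B_alt using c by (intro sum.cong refl) (simp add: block_def)
  finally have e: "B (dA*dC) \<sigma> w' w' = B dA (block dA dC c c \<sigma>) w w" .
  show "Im (B dA (block dA dC c c \<sigma>) w w) = 0" "Re (B dA (block dA dC c c \<sigma>) w w) \<ge> 0"
    using psdD(1)[OF p, of w'] psdD(2)[OF p, of w'] unfolding e by auto
qed

lemma mtrace_blocks:
  assumes "\<sigma> \<in> carrier_mat (dA*dC) (dA*dC)"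
  shows "mtrace \<sigma> = (\<Sum>c<dC. mtrace (block dA dC c c \<sigma>))"
proof -
  have "mtrace \<sigma> = (\<Sum>a<dA. \<Sum>c<dC. \<sigma> $$ (c + a*dC, c + a*dC))"
    unfolding mtrace_def using assms by (simp add: sum_mult_prod)
  also have "\<dots> = (\<Sum>c<dC. \<Sum>a<dA. \<sigma> $$ (a*dC + c, a*dC + c))"
    by (subst sum.swap) (simp add: add.commute)
  also have "\<dots> = (\<Sum>c<dC. mtrace (block dA dC c c \<sigma>))"
  proof (intro sum.cong refl)
    fix c assume "c \<in> {..<dC}"
    show "(\<Sum>a<dA. \<sigma> $$ (a*dC + c, a*dC + c)) = mtrace (block dA dC c c \<sigma>)"
      unfolding mtrace_def block_dims by (intro sum.cong refl) simp
  qed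
  finally show ?thesis .
qed

lemma psd_proj: assumes "\<phi> \<in> carrier_vec n" shows "psd n (proj \<phi>)"
  unfolding psd_iff
proof (intro conjI allI)
  show "proj \<phi> \<in> carrier_mat n n" using assms by simp
  fix w :: "nat \<Rightarrow> complex"
  define z where "z = (\<Sum>i<n. cnj (w i) * \<phi> $ i)"
  have "B n (proj \<phi>) w w = (\<Sum>i<n. \<Sum>j<n. (cnj (w i) * \<phi> $ i) * (cnj (\<phi> $ j) * w j))"
    unfolding B_def using assms by (intro sum.cong refl) (simp add: algebra_simps)
  also have "\<dots> = z * cnj z"
  proof -
    have cz: "cnj z = (\<Sum>j<n. cnj (\<phi> $ j) * w j)" by (simp add: z_def mult.commute)
    show ?thesis unfolding cz unfolding z_def sum_product by (rule refl)
  qed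
  also have "\<dots> = complex_of_real ((cmod z)^2)" by (rule mult_cnj_norm)
  finally show "Im (B n (proj \<phi>) w w) = 0" "Re (B n (proj \<phi>) w w) \<ge> 0" by simp_all
qed

lemma mtrace_proj: assumes "\<phi> \<in> carrier_vec n" shows "mtrace (proj \<phi>) = conjugate \<phi> \<bullet> \<phi>"
  using assms unfolding mtrace_def scalar_prod_def
  by (auto simp: lessThan_atLeast0 mult.commute intro!: sum.cong)

lemma density_proj: "pure_state n \<phi> \<Longrightarrow> density n (proj \<phi>)"
  unfolding density_def pure_state_def using psd_proj[of \<phi> n] mtrace_proj[of \<phi> n] by auto

lemma channelD:
  assumes "channel dA dB \<Theta>"
  shows "\<And>X. X \<in> carrier_mat dA dA \<Longrightarrow> \<Theta> X \<in> carrier_mat dB dB"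
    "\<And>X Y. X \<in> carrier_mat dA dA \<Longrightarrow> Y \<in> carrier_mat dA dA \<Longrightarrow> \<Theta> (X + Y) = \<Theta> X + \<Theta> Y"
    "\<And>X a. X \<in> carrier_mat dA dA \<Longrightarrow> \<Theta> (a \<cdot>\<^sub>m X) = a \<cdot>\<^sub>m \<Theta> X"
    "\<And>X. X \<in> carrier_mat dA dA \<Longrightarrow> mtrace (\<Theta> X) = mtrace X"
    "\<And>dC \<sigma>. psd (dA * dC) \<sigma> \<Longrightarrow> psd (dB * dC) (tensor_id \<Theta> dA dB dC \<sigma>)"
  using assms unfolding channel_def by blast+

definition Lc :: "real \<Rightarrow> (complex mat \<Rightarrow> complex mat) \<Rightarrow> (complex mat \<Rightarrow> complex mat) \<Rightarrow> nat \<Rightarrow> nat \<Rightarrow> complex mat \<Rightarrow> complex" where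
  "Lc lam \<Theta>0 \<Theta>1 dB b X = (if b < dB then complex_of_real lam * \<Theta>0 X $$ (b,b) - complex_of_real (1 - lam) * \<Theta>1 X $$ (b,b) else 0)"

context
  fixes \<Theta>0 \<Theta>1 :: "complex mat \<Rightarrow> complex mat" and dA dB :: nat and lam :: real
  assumes ch0: "channel dA dB \<Theta>0" and ch1: "channel dA dB \<Theta>1"
begin

lemma Lc_add: "X \<in> carrier_mat dA dA \<Longrightarrow> Y \<in> carrier_mat dA dA \<Longrightarrow>
   Lc lam \<Theta>0 \<Theta>1 dB b (X + Y) = Lc lam \<Theta>0 \<Theta>1 dB b X + Lc lam \<Theta>0 \<Theta>1 dB b Y"
proof -
  assume X: "X \<in> carrier_mat dA dA" and Y: "Y \<in> carrier_mat dA dA"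
  note c = carrier_matD[OF channelD(1)[OF ch0 X]] carrier_matD[OF channelD(1)[OF ch0 Y]]
     carrier_matD[OF channelD(1)[OF ch1 X]] carrier_matD[OF channelD(1)[OF ch1 Y]]
  show ?thesis unfolding Lc_def channelD(2)[OF ch0 X Y] channelD(2)[OF ch1 X Y]
    using c by (simp add: algebra_simps)
qed

lemma Lc_hom: "X \<in> carrier_mat dA dA \<Longrightarrow> Lc lam \<Theta>0 \<Theta>1 dB b (a \<cdot>\<^sub>m X) = a * Lc lam \<Theta>0 \<Theta>1 dB b X"
proof -
  assume X: "X \<in> carrier_mat dA dA"
  note c = carrier_matD[OF channelD(1)[OF ch0 X]] carrier_matD[OF channelD(1)[OF ch1 X]]
  show ?thesis unfolding Lc_def channelD(3)[OF ch0 X] channelD(3)[OF ch1 X]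
    using c by (simp add: algebra_simps)
qed

lemma Lc_sum: assumes X: "X \<in> carrier_mat dA dA"
  shows "(\<Sum>b<dB. Lc lam \<Theta>0 \<Theta>1 dB b X) = complex_of_real (2 * lam - 1) * mtrace X"
proof -
  have c0: "\<Theta>0 X \<in> carrier_mat dB dB" and c1: "\<Theta>1 X \<in> carrier_mat dB dB"
    using channelD(1)[OF ch0 X] channelD(1)[OF ch1 X] .
  have "(\<Sum>b<dB. Lc lam \<Theta>0 \<Theta>1 dB b X) = complex_of_real lam * mtrace (\<Theta>0 X) - complex_of_real (1 - lam) * mtrace (\<Theta>1 X)"
    unfolding Lc_def mtrace_def using c0 c1 by (simp add: sum_subtractf sum_distrib_left)
  also have "\<dots> = complex_of_real (2 * lam - 1) * mtrace X"
    using channelD(4)[OF ch0 X] channelD(4)[OF ch1 X] by (simp add: algebra_simps)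
  finally show ?thesis .
qed

lemma T_trace_norm: assumes X: "X \<in> carrier_mat dA dA"
  shows "trace_norm (dephase (complex_of_real lam \<cdot>\<^sub>m \<Theta>0 X - complex_of_real (1 - lam) \<cdot>\<^sub>m \<Theta>1 X))
     = (\<Sum>b<dB. cmod (Lc lam \<Theta>0 \<Theta>1 dB b X))"
proof -
  have c0: "\<Theta>0 X \<in> carrier_mat dB dB" and c1: "\<Theta>1 X \<in> carrier_mat dB dB"
    using channelD(1)[OF ch0 X] channelD(1)[OF ch1 X] .
  define Y where "Y = complex_of_real lam \<cdot>\<^sub>m \<Theta>0 X - complex_of_real (1 - lam) \<cdot>\<^sub>m \<Theta>1 X"
  have Yc: "Y \<in> carrier_mat dB dB" unfolding Y_def using c0 c1 by auto
  have Dc: "dephase Y \<in> carrier_mat dB dB" using Yc by (simp add: dephase_def)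
  have "trace_norm (dephase Y) = (\<Sum>i<dB. cmod (dephase Y $$ (i,i)))"
    by (rule trace_norm_diag[OF Dc]) (use Yc in \<open>simp add: dephase_def\<close>)
  also have "\<dots> = (\<Sum>b<dB. cmod (Lc lam \<Theta>0 \<Theta>1 dB b X))"
    by (intro sum.cong refl) (use Yc c0 c1 in \<open>simp add: dephase_def Y_def Lc_def\<close>)
  finally show ?thesis unfolding Y_def .
qed

lemma tensor_one: assumes X: "X \<in> carrier_mat dA dA" and ch: "channel dA dB \<Theta>"
  shows "tensor_id \<Theta> dA dB 1 X = \<Theta> X"
proof -
  have b: "block dA (Suc 0) 0 0 X = X" by (rule eq_matI) (use X in auto)
  show ?thesis
    by (rule eq_matI) (use channelD(1)[OF ch X] in \<open>auto simp: tensor_id_def b\<close>)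
qed

lemma Lc_real: assumes P: "psd dA P" shows "Im (Lc lam \<Theta>0 \<Theta>1 dB b P) = 0"
proof (cases "b < dB")
  case True
  have Pc: "P \<in> carrier_mat dA dA" using psdD(3)[OF P] .
  have "psd (dB * 1) (tensor_id \<Theta>0 dA dB 1 P)" by (rule channelD(5)[OF ch0]) (use P in simp)
  hence p0: "psd dB (\<Theta>0 P)" using tensor_one[OF Pc ch0] by simp
  have "psd (dB * 1) (tensor_id \<Theta>1 dA dB 1 P)" by (rule channelD(5)[OF ch1]) (use P in simp)
  hence p1: "psd dB (\<Theta>1 P)" using tensor_one[OF Pc ch1] by simp
  show ?thesis unfolding Lc_def using True psd_diag_real(1)[OF p0 True] psd_diag_real(1)[OF p1 True] by simp
qed (simp add: Lc_def)

end

lemma diag_trace: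
  assumes M: "M \<in> carrier_mat N N" and dg: "diagonal_mat M" and Y: "Y \<in> carrier_mat N N"
  shows "mtrace (M * Y) = (\<Sum>k<N. M $$ (k,k) * Y $$ (k,k))"
proof -
  have "(M * Y) $$ (k,k) = M $$ (k,k) * Y $$ (k,k)" if k: "k < N" for k
  proof -
    have "(M * Y) $$ (k,k) = (\<Sum>l<N. M $$ (k,l) * Y $$ (l,k))"
      using M Y k by (simp add: scalar_prod_def lessThan_atLeast0)
    also have "\<dots> = (\<Sum>l<N. if l = k then M $$ (k,k) * Y $$ (k,k) else 0)"
      by (intro sum.cong refl) (use dg M k in \<open>auto simp: diagonal_mat_def\<close>)
    finally show ?thesis using k by simp
  qed
  thus ?thesis unfolding mtrace_def using M by simp
qed

lemma idx_less: "b < (P::nat) \<Longrightarrow> c < C \<Longrightarrow> c + b*C < P*C"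
proof -
  assume b: "b < P" and c: "c < C"
  have "c + b*C < C + b*C" using c by simp
  also have "\<dots> = Suc b * C" by simp
  also have "\<dots> \<le> P * C" using b by (intro mult_le_mono1) simp
  finally show ?thesis .
qed

lemma tensor_id_carrier: "tensor_id \<Theta> dA dB dC \<sigma> \<in> carrier_mat (dB*dC) (dB*dC)"
  by (simp add: tensor_id_def)

lemma tensor_id_diag: "k < dB*dC \<Longrightarrow> tensor_id \<Theta> dA dB dC \<sigma> $$ (k,k) =
   \<Theta> (block dA dC (k mod dC) (k mod dC) \<sigma>) $$ (k div dC, k div dC)"
  by (simp add: tensor_id_def)

lemma re_trace_diag:
  assumes M: "psd N M" "diagonal_mat M" and Y: "Y \<in> carrier_mat N N"
  shows "Re (mtrace (M * Y)) = (\<Sum>k<N. Re (M $$ (k,k)) * Re (Y $$ (k,k)))"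
proof -
  have Mc: "M \<in> carrier_mat N N" using psdD(3)[OF M(1)] .
  have "Re (mtrace (M * Y)) = (\<Sum>k<N. Re (M $$ (k,k) * Y $$ (k,k)))"
    unfolding diag_trace[OF Mc M(2) Y] by (simp add: Re_sum)
  also have "\<dots> = (\<Sum>k<N. Re (M $$ (k,k)) * Re (Y $$ (k,k)))"
    by (intro sum.cong refl) (use psd_diag_real(1)[OF M(1)] in simp)
  finally show ?thesis .
qed

context
  fixes \<Theta>0 \<Theta>1 :: "complex mat \<Rightarrow> complex mat" and dA dB :: nat and lam :: real
  assumes ch0: "channel dA dB \<Theta>0" and ch1: "channel dA dB \<Theta>1"
begin

lemma success_formula:
  assumes \<sigma>: "density (dA*dC) \<sigma>" and M: "incoherent_povm (dB*dC) M0 M1"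
  shows "lam * Re (mtrace (M0 * tensor_id \<Theta>0 dA dB dC \<sigma>)) + (1 - lam) * Re (mtrace (M1 * tensor_id \<Theta>1 dA dB dC \<sigma>))
     = (1 - lam) + (\<Sum>b<dB. \<Sum>c<dC. Re (M0 $$ (c + b*dC, c + b*dC)) * Re (Lc lam \<Theta>0 \<Theta>1 dB b (block dA dC c c \<sigma>)))"
proof -
  define N where "N = dB * dC"
  have p0: "psd N M0" and p1: "psd N M1" and d0: "diagonal_mat M0" and d1: "diagonal_mat M1"
    and sum1: "M0 + M1 = 1\<^sub>m N" using M unfolding incoherent_povm_def N_def by auto
  have M0c: "M0 \<in> carrier_mat N N" and M1c: "M1 \<in> carrier_mat N N" using psdD(3)[OF p0] psdD(3)[OF p1] .
  have m1: "Re (M1 $$ (k,k)) = 1 - Re (M0 $$ (k,k))" if "k < N" for k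
  proof -
    have "(M0 + M1) $$ (k,k) = 1" using sum1 that by simp
    thus ?thesis using that M0c M1c by (simp add: complex_eq_iff)
  qed
  have \<sigma>p: "psd (dA*dC) \<sigma>" and tr1: "mtrace \<sigma> = 1" using \<sigma> unfolding density_def by auto
  have \<sigma>c: "\<sigma> \<in> carrier_mat (dA*dC) (dA*dC)" using psdD(3)[OF \<sigma>p] .
  define f0 where "f0 b c = \<Theta>0 (block dA dC c c \<sigma>) $$ (b,b)" for b c
  define f1 where "f1 b c = \<Theta>1 (block dA dC c c \<sigma>) $$ (b,b)" for b c
  define \<mu> where "\<mu> b c = Re (M0 $$ (c + b*dC, c + b*dC))" for b c
  have idx: "(c + b*dC) mod dC = c" "(c + b*dC) div dC = b" if "c < dC" for b c
    using that by auto
  have S0: "Re (mtrace (M0 * tensor_id \<Theta>0 dA dB dC \<sigma>)) = (\<Sum>b<dB. \<Sum>c<dC. \<mu> b c * Re (f0 b c))"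
  proof -
    have "Re (mtrace (M0 * tensor_id \<Theta>0 dA dB dC \<sigma>)) = (\<Sum>k<dB*dC. Re (M0 $$ (k,k)) * Re (tensor_id \<Theta>0 dA dB dC \<sigma> $$ (k,k)))"
      using re_trace_diag[OF p0 d0, of "tensor_id \<Theta>0 dA dB dC \<sigma>"] tensor_id_carrier unfolding N_def by simp
    also have "\<dots> = (\<Sum>b<dB. \<Sum>c<dC. \<mu> b c * Re (f0 b c))"
      unfolding sum_mult_prod
    proof (intro sum.cong refl)
      fix b c assume "b \<in> {..<dB}" "c \<in> {..<dC}"
      hence "c + b*dC < dB*dC" by (simp add: idx_less)
      thus "Re (M0 $$ (c + b*dC, c + b*dC)) * Re (tensor_id \<Theta>0 dA dB dC \<sigma> $$ (c + b*dC, c + b*dC)) = \<mu> b c * Re (f0 b c)"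
        using \<open>c \<in> {..<dC}\<close> by (simp add: tensor_id_diag idx \<mu>_def f0_def)
    qed
    finally show ?thesis .
  qed
  have S1: "Re (mtrace (M1 * tensor_id \<Theta>1 dA dB dC \<sigma>)) = (\<Sum>b<dB. \<Sum>c<dC. (1 - \<mu> b c) * Re (f1 b c))"
  proof -
    have "Re (mtrace (M1 * tensor_id \<Theta>1 dA dB dC \<sigma>)) = (\<Sum>k<dB*dC. Re (M1 $$ (k,k)) * Re (tensor_id \<Theta>1 dA dB dC \<sigma> $$ (k,k)))"
      using re_trace_diag[OF p1 d1, of "tensor_id \<Theta>1 dA dB dC \<sigma>"] tensor_id_carrier unfolding N_def by simp
    also have "\<dots> = (\<Sum>b<dB. \<Sum>c<dC. (1 - \<mu> b c) * Re (f1 b c))"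
      unfolding sum_mult_prod
    proof (intro sum.cong refl)
      fix b c assume "b \<in> {..<dB}" "c \<in> {..<dC}"
      hence "c + b*dC < dB*dC" by (simp add: idx_less)
      thus "Re (M1 $$ (c + b*dC, c + b*dC)) * Re (tensor_id \<Theta>1 dA dB dC \<sigma> $$ (c + b*dC, c + b*dC)) = (1 - \<mu> b c) * Re (f1 b c)"
        using \<open>c \<in> {..<dC}\<close> by (simp add: tensor_id_diag idx \<mu>_def f1_def m1[unfolded N_def])
    qed
    finally show ?thesis .
  qed
  have F1: "(\<Sum>b<dB. \<Sum>c<dC. Re (f1 b c)) = 1"
  proof -
    have "(\<Sum>b<dB. \<Sum>c<dC. Re (f1 b c)) = (\<Sum>c<dC. \<Sum>b<dB. Re (f1 b c))" by (rule sum.swap)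
    also have "\<dots> = (\<Sum>c<dC. Re (mtrace (block dA dC c c \<sigma>)))"
    proof (intro sum.cong refl)
      fix c
      have c1: "\<Theta>1 (block dA dC c c \<sigma>) \<in> carrier_mat dB dB" by (rule channelD(1)[OF ch1 block_carrier])
      have "(\<Sum>b<dB. Re (f1 b c)) = Re (mtrace (\<Theta>1 (block dA dC c c \<sigma>)))"
        unfolding mtrace_def f1_def using c1 by (simp add: Re_sum)
      also have "\<dots> = Re (mtrace (block dA dC c c \<sigma>))" using channelD(4)[OF ch1 block_carrier] by simp
      finally show "(\<Sum>b<dB. Re (f1 b c)) = Re (mtrace (block dA dC c c \<sigma>))" .
    qed
    also have "\<dots> = Re (mtrace \<sigma>)" unfolding mtrace_blocks[OF \<sigma>c] by (simp add: Re_sum)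
    finally show ?thesis using tr1 by simp
  qed
  have Lre: "Re (Lc lam \<Theta>0 \<Theta>1 dB b (block dA dC c c \<sigma>)) = lam * Re (f0 b c) - (1 - lam) * Re (f1 b c)" if "b < dB" for b c
    using that by (simp add: Lc_def f0_def f1_def)
  have "lam * Re (mtrace (M0 * tensor_id \<Theta>0 dA dB dC \<sigma>)) + (1 - lam) * Re (mtrace (M1 * tensor_id \<Theta>1 dA dB dC \<sigma>))
     = (\<Sum>b<dB. \<Sum>c<dC. lam * (\<mu> b c * Re (f0 b c)) + (1 - lam) * ((1 - \<mu> b c) * Re (f1 b c)))"
    unfolding S0 S1 by (simp add: sum_distrib_left sum.distrib)
  also have "\<dots> = (\<Sum>b<dB. \<Sum>c<dC. (1 - lam) * Re (f1 b c) + \<mu> b c * Re (Lc lam \<Theta>0 \<Theta>1 dB b (block dA dC c c \<sigma>)))"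
    by (intro sum.cong refl) (simp add: Lre algebra_simps)
  also have "\<dots> = (1 - lam) * (\<Sum>b<dB. \<Sum>c<dC. Re (f1 b c)) + (\<Sum>b<dB. \<Sum>c<dC. \<mu> b c * Re (Lc lam \<Theta>0 \<Theta>1 dB b (block dA dC c c \<sigma>)))"
    by (simp add: sum_distrib_left sum.distrib)
  finally show ?thesis unfolding F1 \<mu>_def by simp
qed

lemma mu_bounds:
  assumes M: "incoherent_povm N M0 M1" and k: "k < N"
  shows "0 \<le> Re (M0 $$ (k,k))" "Re (M0 $$ (k,k)) \<le> 1"
proof -
  have p0: "psd N M0" and p1: "psd N M1" and sum1: "M0 + M1 = 1\<^sub>m N"
    using M unfolding incoherent_povm_def by auto
  have M0c: "M0 \<in> carrier_mat N N" and M1c: "M1 \<in> carrier_mat N N" using psdD(3)[OF p0] psdD(3)[OF p1] .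
  have "(M0 + M1) $$ (k,k) = 1" using sum1 k by simp
  hence "Re (M1 $$ (k,k)) = 1 - Re (M0 $$ (k,k))" using k M0c M1c by (simp add: complex_eq_iff)
  thus "0 \<le> Re (M0 $$ (k,k))" "Re (M0 $$ (k,k)) \<le> 1" using psd_diag_real(2)[OF p0 k] psd_diag_real(2)[OF p1 k] by auto
qed

end

lemma mu_le: "0 \<le> (\<mu>::real) \<Longrightarrow> \<mu> \<le> 1 \<Longrightarrow> \<mu> * Re z \<le> (cmod z + Re z) / 2"
proof -
  assume m: "0 \<le> \<mu>" "\<mu> \<le> 1"
  have a: "\<bar>Re z\<bar> \<le> cmod z" by (rule abs_Re_le_cmod)
  show ?thesis
  proof (cases "Re z \<ge> 0")
    case True
    have "\<mu> * Re z \<le> 1 * Re z" using m True by (intro mult_right_mono) auto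
    thus ?thesis using a True by simp
  next
    case False
    have "\<mu> * Re z \<le> 0" using m False by (intro mult_nonneg_nonpos) auto
    thus ?thesis using a False by simp
  qed
qed

theorem proposition17:
  fixes \<Theta>0 \<Theta>1 :: "complex mat \<Rightarrow> complex mat" and dA dB :: nat and lam :: real
  assumes "dA > 0" and "dB > 0"
    and "channel dA dB \<Theta>0" and "channel dA dB \<Theta>1"
    and "0 \<le> lam" and "lam \<le> 1"
  defines "T \<equiv> (\<lambda>X. dephase (complex_of_real lam \<cdot>\<^sub>m \<Theta>0 X - complex_of_real (1 - lam) \<cdot>\<^sub>m \<Theta>1 X))"
  shows "\<exists>\<psi>. pure_state dA \<psi> \<and>
           (\<forall>\<phi>. pure_state dA \<phi> \<longrightarrow> trace_norm (T (proj \<phi>)) \<le> trace_norm (T (proj \<psi>))) \<and>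
           P_c lam \<Theta>0 \<Theta>1 dA dB = 1/2 + 1/2 * trace_norm (T (proj \<psi>))"
proof -
  note ch0 = assms(3) and ch1 = assms(4)
  define L where "L = Lc lam \<Theta>0 \<Theta>1 dB"
  have Ladd: "\<And>b X Y. X \<in> carrier_mat dA dA \<Longrightarrow> Y \<in> carrier_mat dA dA \<Longrightarrow> L b (X + Y) = L b X + L b Y"
    unfolding L_def by (rule Lc_add[OF ch0 ch1])
  have Lhom: "\<And>b X a. X \<in> carrier_mat dA dA \<Longrightarrow> L b (a \<cdot>\<^sub>m X) = a * L b X"
    unfolding L_def by (rule Lc_hom[OF ch0 ch1])
  have Teq: "trace_norm (T X) = (\<Sum>b<dB. cmod (L b X))" if "X \<in> carrier_mat dA dA" for X
    unfolding T_def L_def using T_trace_norm[OF ch0 ch1 that] by simp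
  define F where "F \<phi> = trace_norm (T (proj \<phi>))" for \<phi>
  have eqF: "F (vec dA x) = (\<Sum>b<dB. cmod (\<Sum>i<dA. \<Sum>j<dA. x i * cnj (x j) * L b (Eij dA i j)))" for x
  proof -
    have pc: "proj (vec dA x) \<in> carrier_mat dA dA" by simp
    have "F (vec dA x) = (\<Sum>b<dB. cmod (L b (proj (vec dA x))))" unfolding F_def by (rule Teq[OF pc])
    also have "\<dots> = (\<Sum>b<dB. cmod (\<Sum>i<dA. \<Sum>j<dA. proj (vec dA x) $$ (i,j) * L b (Eij dA i j)))"
      by (intro sum.cong refl arg_cong[where f=cmod] lin_expand[where l="L _"] Ladd Lhom pc) auto
    also have "\<dots> = (\<Sum>b<dB. cmod (\<Sum>i<dA. \<Sum>j<dA. x i * cnj (x j) * L b (Eij dA i j)))"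
      by (intro sum.cong refl arg_cong[where f=cmod]) simp
    finally show ?thesis .
  qed
  have cont: "continuous_on UNIV (\<lambda>x::nat\<Rightarrow>complex. F (vec dA x))"
    unfolding eqF by (intro continuous_intros)
  obtain \<psi> where \<psi>: "pure_state dA \<psi>" and mx: "\<And>\<phi>. pure_state dA \<phi> \<Longrightarrow> F \<phi> \<le> F \<psi>"
    using exists_max_pure[OF assms(1) cont] by blast
  define fs where "fs = F \<psi>"
  have \<psi>c: "\<psi> \<in> carrier_vec dA" using \<psi> by (simp add: pure_state_def)
  have bound: "(\<Sum>b<dB. cmod (L b (proj \<phi>))) \<le> fs" if "pure_state dA \<phi>" for \<phi>
  proof -
    have "\<phi> \<in> carrier_vec dA" using that by (simp add: pure_state_def)
    hence "(\<Sum>b<dB. cmod (L b (proj \<phi>))) = F \<phi>" unfolding F_def by (simp add: Teq)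
    thus ?thesis using mx[OF that] fs_def by simp
  qed
  define S where "S = success_probs lam \<Theta>0 \<Theta>1 dA dB"
  have upper: "p \<le> 1/2 + fs/2" if "p \<in> S" for p
  proof -
    from that obtain dC \<sigma> M0 M1 where dC: "dC > 0" and \<sigma>: "density (dA * dC) \<sigma>"
      and M: "incoherent_povm (dB * dC) M0 M1"
      and p: "p = lam * Re (mtrace (M0 * tensor_id \<Theta>0 dA dB dC \<sigma>)) + (1 - lam) * Re (mtrace (M1 * tensor_id \<Theta>1 dA dB dC \<sigma>))"
      unfolding S_def success_probs_def by blast
    have \<sigma>p: "psd (dA*dC) \<sigma>" and tr1: "mtrace \<sigma> = 1" using \<sigma> unfolding density_def by auto
    have \<sigma>c: "\<sigma> \<in> carrier_mat (dA*dC) (dA*dC)" using psdD(3)[OF \<sigma>p] .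
    define \<mu> where "\<mu> b c = Re (M0 $$ (c + b*dC, c + b*dC))" for b c
    define Z where "Z c = block dA dC c c \<sigma>" for c
    have p2: "p = (1 - lam) + (\<Sum>b<dB. \<Sum>c<dC. \<mu> b c * Re (L b (Z c)))"
      unfolding p success_formula[OF ch0 ch1 \<sigma> M] \<mu>_def L_def Z_def ..
    have "(\<Sum>b<dB. \<Sum>c<dC. \<mu> b c * Re (L b (Z c))) \<le> (\<Sum>b<dB. \<Sum>c<dC. (cmod (L b (Z c)) + Re (L b (Z c))) / 2)"
    proof (intro sum_mono)
      fix b c assume b: "b \<in> {..<dB}" and c: "c \<in> {..<dC}"
      have k: "c + b*dC < dB*dC" using b c by (simp add: idx_less)
      show "\<mu> b c * Re (L b (Z c)) \<le> (cmod (L b (Z c)) + Re (L b (Z c))) / 2"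
        unfolding \<mu>_def by (rule mu_le[OF mu_bounds(1)[OF ch0 ch1 M k] mu_bounds(2)[OF ch0 ch1 M k]])
    qed
    also have "\<dots> = ((\<Sum>c<dC. \<Sum>b<dB. cmod (L b (Z c))) + (\<Sum>c<dC. \<Sum>b<dB. Re (L b (Z c)))) / 2"
      by (simp add: sum.distrib sum_divide_distrib[symmetric] sum.swap[of _ "{..<dB}" "{..<dC}"])
    also have "(\<Sum>c<dC. \<Sum>b<dB. Re (L b (Z c))) = (\<Sum>c<dC. (2 * lam - 1) * Re (mtrace (Z c)))"
    proof (intro sum.cong refl)
      fix c
      have "(\<Sum>b<dB. Re (L b (Z c))) = Re (\<Sum>b<dB. L b (Z c))" by (simp add: Re_sum)
      also have "\<dots> = (2 * lam - 1) * Re (mtrace (Z c))"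
        unfolding L_def Lc_sum[OF ch0 ch1 block_carrier[of dA dC c c \<sigma>, folded Z_def]] by simp
      finally show "(\<Sum>b<dB. Re (L b (Z c))) = (2 * lam - 1) * Re (mtrace (Z c))" .
    qed
    also have "\<dots> = 2 * lam - 1"
      using mtrace_blocks[OF \<sigma>c] tr1 unfolding Z_def by (simp add: sum_distrib_left[symmetric] Re_sum[symmetric])
    also have "(\<Sum>c<dC. \<Sum>b<dB. cmod (L b (Z c))) \<le> (\<Sum>c<dC. Re (mtrace (Z c)) * fs)"
    proof (intro sum_mono)
      fix c assume c: "c \<in> {..<dC}"
      have pZ: "psd dA (Z c)" unfolding Z_def by (rule psd_block[OF \<sigma>p]) (use c in simp)
      note q = psd_bound[OF Ladd Lhom bound pZ]
      show "(\<Sum>b<dB. cmod (L b (Z c))) \<le> Re (mtrace (Z c)) * fs"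
        using q by simp
    qed
    also have "(\<Sum>c<dC. Re (mtrace (Z c)) * fs) = fs"
      using mtrace_blocks[OF \<sigma>c] tr1 unfolding Z_def by (simp add: sum_distrib_right[symmetric] Re_sum[symmetric])
    finally show ?thesis using p2 by simp
  qed
  define P where "P = proj \<psi>"
  have Pc: "P \<in> carrier_mat dA dA" unfolding P_def using \<psi>c by simp
  have Pp: "psd dA P" unfolding P_def by (rule psd_proj[OF \<psi>c])
  have trP: "mtrace P = 1" unfolding P_def using mtrace_proj[OF \<psi>c] \<psi> by (simp add: pure_state_def)
  have fsP: "fs = (\<Sum>b<dB. cmod (L b P))" unfolding fs_def F_def P_def by (rule Teq[OF Pc[unfolded P_def]])
  define q0 where "q0 b = (if Re (L b P) \<ge> 0 then 1 else 0 :: real)" for b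
  define M0 where "M0 = diagm dB (\<lambda>b. complex_of_real (q0 b))"
  define M1 where "M1 = diagm dB (\<lambda>b. complex_of_real (1 - q0 b))"
  have povm: "incoherent_povm (dB * 1) M0 M1"
    unfolding incoherent_povm_def
  proof (intro conjI)
    show "psd (dB * 1) M0" unfolding M0_def mult_1_right by (rule psd_diagm) (simp add: q0_def)
    show "psd (dB * 1) M1" unfolding M1_def mult_1_right by (rule psd_diagm) (simp add: q0_def)
    show "diagonal_mat M0" unfolding M0_def diagonal_mat_def by simp
    show "diagonal_mat M1" unfolding M1_def diagonal_mat_def by simp
    show "M0 + M1 = 1\<^sub>m (dB * 1)" unfolding M0_def M1_def by (rule eq_matI) auto
  qed
  have dens: "density (dA * 1) P" unfolding P_def using density_proj[OF \<psi>] by simp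
  define p0 where "p0 = lam * Re (mtrace (M0 * tensor_id \<Theta>0 dA dB 1 P)) + (1 - lam) * Re (mtrace (M1 * tensor_id \<Theta>1 dA dB 1 P))"
  have inS: "p0 \<in> S" unfolding S_def success_probs_def p0_def using dens povm by blast
  have bP: "block dA 1 0 0 P = P" by (rule eq_matI) (use Pc in auto)
  have "p0 = (1 - lam) + (\<Sum>b<dB. \<Sum>c<1. Re (M0 $$ (c + b*1, c + b*1)) * Re (L b (block dA 1 c c P)))"
    unfolding p0_def L_def by (rule success_formula[OF ch0 ch1 dens povm])
  also have "\<dots> = (1 - lam) + (\<Sum>b<dB. q0 b * Re (L b P))"
    using bP by (simp add: M0_def)
  also have "(\<Sum>b<dB. q0 b * Re (L b P)) = (\<Sum>b<dB. (cmod (L b P) + Re (L b P)) / 2)"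
  proof (intro sum.cong refl)
    fix b
    have im: "Im (L b P) = 0" unfolding L_def by (rule Lc_real[OF ch0 ch1 Pp])
    hence cm: "cmod (L b P) = \<bar>Re (L b P)\<bar>" by (simp add: cmod_def)
    show "q0 b * Re (L b P) = (cmod (L b P) + Re (L b P)) / 2"
      unfolding cm q0_def by auto
  qed
  also have "\<dots> = (fs + (\<Sum>b<dB. Re (L b P))) / 2"
    unfolding fsP by (simp add: sum.distrib sum_divide_distrib[symmetric])
  also have "(\<Sum>b<dB. Re (L b P)) = 2 * lam - 1"
  proof -
    have "(\<Sum>b<dB. Re (L b P)) = Re (\<Sum>b<dB. L b P)" by (simp add: Re_sum)
    also have "\<dots> = 2 * lam - 1" unfolding L_def Lc_sum[OF ch0 ch1 Pc] trP by simp
    finally show ?thesis .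
  qed
  finally have p0v: "p0 = 1/2 + fs/2" by (simp add: field_simps)
  have "P_c lam \<Theta>0 \<Theta>1 dA dB = 1/2 + fs/2"
    unfolding P_c_def S_def[symmetric]
    by (rule cSup_eq_maximum) (use inS p0v upper in auto)
  moreover have "\<forall>\<phi>. pure_state dA \<phi> \<longrightarrow> trace_norm (T (proj \<phi>)) \<le> trace_norm (T (proj \<psi>))"
    using mx unfolding F_def by blast
  ultimately show ?thesis using \<psi> unfolding fs_def F_def by auto
qed

end
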